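(* In the setting below, suppose $p\geq5$. Then for all distinct $i,j,k\in\mathbb Z/N\mathbb Z$ we have $P^+_{ij}\cap P^+_{jk}\subset P^+_{ik}$.
   Context: Setting: $p,q$ distinct primes, $N=p+q$; $M=(m_{ik})_{i,k\in\mathbb Z/N\mathbb Z}$ has entries in $\mathbb Z/pq\mathbb Z$ and $(e^{2\pi i\,m_{ik}/pq})$ is a complex Hadamard matrix (unimodular entries, orthogonal rows). $L_i(k)=m_{ik}$, $L_{ij}=L_j-L_i$. For $d\mid pq$, $d(\mathbb Z/pq\mathbb Z)$ is the subgroup of multiples of $d$. For distinct $i,j$ there is a partition $\mathbb Z/N\mathbb Z=P_{ij}\sqcup Q_{ij}\sqcup R_{ij}$ and $r\in\mathbb Z/pq\mathbb Z$ with: $\#R_{ij}=2$ and $L_{ij}\equiv r$ on $R_{ij}$; $\#P_{ij}=p-1$ and $L_{ij}(P_{ij})=(r+q(\mathbb Z/pq\mathbb Z))\setminus\{r\}$; $\#Q_{ij}=q-1$ and $L_{ij}(Q_{ij})=(r+p(\mathbb Z/pq\mathbb Z))\setminus\{r\}$. This partition is unique ($R_{ij}$ is the pair of indices where $L_{ij}$ takes its unique repeated value). Put $P^+_{ij}=P_{ij}\cup R_{ij}$, $Q^+_{ij}=Q_{ij}\cup R_{ij}$. *)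

theory Defs
  imports Complex_Main "HOL-Computational_Algebra.Primes"
begin

text \<open>Indices of Z/NZ are represented by {0..<N}; elements of Z/pqZ by their
  canonical representatives in {0..<p*q} (integers taken mod p*q).
  The matrix M is a function nat => nat => int read modulo p*q.\<close>

definition complex_hadamard_mod :: "nat \<Rightarrow> nat \<Rightarrow> (nat \<Rightarrow> nat \<Rightarrow> int) \<Rightarrow> bool" where
  "complex_hadamard_mod N n M \<longleftrightarrow>
     (\<forall>i<N. \<forall>j<N. i \<noteq> j \<longrightarrow>
        (\<Sum>k<N. exp (2 * of_real pi * \<i> * of_int (M i k) / of_nat n)
               * cnj (exp (2 * of_real pi * \<i> * of_int (M j k) / of_nat n))) = 0)"

definition Ldiff :: "nat \<Rightarrow> (nat \<Rightarrow> nat \<Rightarrow> int) \<Rightarrow> nat \<Rightarrow> nat \<Rightarrow> nat \<Rightarrow> int" where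
  "Ldiff n M i j k = (M j k - M i k) mod int n"

text \<open>The coset r + d(Z/pqZ), as a set of representatives in {0..<p*q}.\<close>
definition coset_mod :: "nat \<Rightarrow> nat \<Rightarrow> int \<Rightarrow> int set" where
  "coset_mod n d r = {x. 0 \<le> x \<and> x < int n \<and> x mod int d = r mod int d}"

definition is_PQR_partition ::
  "nat \<Rightarrow> nat \<Rightarrow> (nat \<Rightarrow> nat \<Rightarrow> int) \<Rightarrow> nat \<Rightarrow> nat
     \<Rightarrow> nat set \<Rightarrow> nat set \<Rightarrow> nat set \<Rightarrow> int \<Rightarrow> bool" where
  "is_PQR_partition p q M i j P Q R r \<longleftrightarrow>
     (let N = p + q; n = p * q; L = Ldiff n M i j in
       P \<union> Q \<union> R = {..<N} \<and> P \<inter> Q = {} \<and> P \<inter> R = {} \<and> Q \<inter> R = {} \<and>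
       0 \<le> r \<and> r < int n \<and>
       card R = 2 \<and> (\<forall>k\<in>R. L k = r) \<and>
       card P = p - 1 \<and> L ` P = coset_mod n q r - {r} \<and>
       card Q = q - 1 \<and> L ` Q = coset_mod n p r - {r})"

definition Pplus :: "nat \<Rightarrow> nat \<Rightarrow> (nat \<Rightarrow> nat \<Rightarrow> int) \<Rightarrow> nat \<Rightarrow> nat \<Rightarrow> nat set" where
  "Pplus p q M i j = (THE S. \<exists>P Q R r. is_PQR_partition p q M i j P Q R r \<and> S = P \<union> R)"

end

theory Submission
  imports Defs
begin

lemma coset_card:
  assumes "d > 0" shows "card (coset_mod (d*e) d r) = e"
proof -
  have "coset_mod (d*e) d r = (\<lambda>t. r mod int d + int d * int t) ` {..<e}"
  proof
    show "coset_mod (d*e) d r \<subseteq> (\<lambda>t. r mod int d + int d * int t) ` {..<e}"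
    proof
      fix x assume "x \<in> coset_mod (d*e) d r"
      then have x: "0 \<le> x" "x < int d * int e" "x mod int d = r mod int d" by (auto simp: coset_mod_def)
      have q0: "0 \<le> x div int d" using x assms by (simp add: pos_imp_zdiv_nonneg_iff)
      have "int d * (x div int d) + x mod int d = x" by (rule mult_div_mod_eq)
      moreover have "0 \<le> x mod int d" using assms by simp
      ultimately have "int d * (x div int d) < int d * int e" using x by linarith
      then have q1: "x div int d < int e" using assms by simp
      have "x = r mod int d + int d * int (nat (x div int d))"
        using q0 x(3) by (metis mod_mult_div_eq nat_0_le)
      moreover have "nat (x div int d) \<in> {..<e}" using q0 q1 by auto
      ultimately show "x \<in> (\<lambda>t. r mod int d + int d * int t) ` {..<e}" by blast
    qed
    show "(\<lambda>t. r mod int d + int d * int t) ` {..<e} \<subseteq> coset_mod (d*e) d r"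
    proof
      fix x assume "x \<in> (\<lambda>t. r mod int d + int d * int t) ` {..<e}"
      then obtain t where t: "t < e" "x = r mod int d + int d * int t" by auto
      have a: "r mod int d < int d" "0 \<le> r mod int d" using assms by auto
      have "int d * int t + int d \<le> int d * int e"
        using t(1) by (metis Suc_eq_plus1 Suc_leI add_mult_distrib2 int_ops(5,7)
    mult_le_mono2 nat_int_comparison(3) nat_mult_1_right)
      then have "x < int (d*e)" using t a by simp
      moreover have "x mod int d = r mod int d" using t by simp
      ultimately show "x \<in> coset_mod (d*e) d r" using t a by (simp add: coset_mod_def)
    qed
  qed
  moreover have "inj_on (\<lambda>t. r mod int d + int d * int t) {..<e}"
    using assms by (auto simp: inj_on_def)
  ultimately show ?thesis by (simp add: card_image)
qed

lemma gauss_dvd: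
  fixes q :: nat assumes "odd q"
  shows "int q dvd (\<Sum>v\<in>{1..<int q}. v)"
proof -
  have "(\<Sum>v\<in>{1..<int q}. v) = (\<Sum>v\<in>{1..<int q}. int q - v)"
    by (rule sum.reindex_bij_witness[where i="\<lambda>v. int q - v" and j="\<lambda>v. int q - v"]) auto
  also have "\<dots> = (\<Sum>v\<in>{1..<int q}. int q) - (\<Sum>v\<in>{1..<int q}. v)"
    by (simp add: sum_subtractf)
  finally have "2 * (\<Sum>v\<in>{1..<int q}. v) = int q * (int q - 1)" by simp
  then have "int q dvd 2 * (\<Sum>v\<in>{1..<int q}. v)" by simp
  moreover have "coprime (int q) 2" using assms by simp
  ultimately show ?thesis using coprime_dvd_mult_right_iff by blast
qed

lemma two_elems: "2 \<le> card A \<Longrightarrow> x \<in> A \<Longrightarrow> \<exists>y\<in>A. y \<noteq> x"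
proof (rule ccontr)
  assume "2 \<le> card A" "x \<in> A" "\<not> (\<exists>y\<in>A. y \<noteq> x)"
  then have "A = {x}" by blast
  then show False using \<open>2 \<le> card A\<close> by simp
qed

lemma part_facts:
  fixes p q :: nat and M :: "nat \<Rightarrow> nat \<Rightarrow> int"
  assumes H: "is_PQR_partition p q M i j P Q R r" and pp: "prime p" "prime q" "p \<noteq> q"
  defines "L \<equiv> Ldiff (p*q) M i j"
  shows "P \<union> R = {x. x < p+q \<and> L x mod int q = r mod int q}"
    and "card (P \<union> R) = p + 1"
    and "inj_on (\<lambda>x. L x mod int q) Q"
    and "Q \<subseteq> {..<p+q}"
    and "\<forall>x\<in>Q. L x mod int q \<noteq> r mod int q"
    and "(\<lambda>x. (L x - r) mod int q) ` Q = {1..<int q}"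
    and "inj_on (\<lambda>x. (L x - r) mod int q) Q"
proof -
  from H have
    U: "P \<union> Q \<union> R = {..<p+q}" and D: "P\<inter>Q={}" "P\<inter>R={}" "Q\<inter>R={}"
    and r: "0 \<le> r" "r < int(p*q)"
    and cR: "card R = 2" and LR: "\<forall>k\<in>R. L k = r" and cP: "card P = p-1"
    and LP: "L ` P = coset_mod (p*q) q r - {r}"
    and cQ: "card Q = q-1" and LQ: "L ` Q = coset_mod (p*q) p r - {r}"
    unfolding is_PQR_partition_def Let_def L_def by auto
  have fin: "finite P" "finite Q" "finite R"
    using U by (metis finite_Un finite_lessThan)+
  have p0: "p > 0" "q > 0" "p \<ge> 2" using pp prime_gt_0_nat prime_ge_2_nat by auto
  have cop: "coprime (int p) (int q)" using primes_coprime[OF pp] by simp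
  have key: "a = b" if "0 \<le> a" "a < int(p*q)" "0 \<le> b" "b < int(p*q)"
      "a mod int p = b mod int p" "a mod int q = b mod int q" for a b
  proof -
    have "int p dvd a - b" "int q dvd a - b" using that by (simp_all add: mod_eq_dvd_iff)
    then have "int p * int q dvd a - b" using cop by (simp add: divides_mult)
    then have "a mod (int p * int q) = b mod (int p * int q)" by (simp add: mod_eq_dvd_iff)
    then show ?thesis using that by simp
  qed
  have Qx: "0 \<le> L x \<and> L x < int (p*q) \<and> L x mod int p = r mod int p \<and> L x \<noteq> r" if "x \<in> Q" for x
  proof -
    have "L x \<in> coset_mod (p*q) p r - {r}" using LQ that by blast
    then show ?thesis by (simp add: coset_mod_def)
  qed
  have Qn: "L x mod int q \<noteq> r mod int q" if "x \<in> Q" for x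
    using Qx[OF that] key[of "L x" r] r by auto
  have Px: "L x mod int q = r mod int q" if "x \<in> P" for x
  proof -
    have "L x \<in> coset_mod (p*q) q r - {r}" using LP that by blast
    then show ?thesis by (simp add: coset_mod_def)
  qed
  show A: "P \<union> R = {x. x < p+q \<and> L x mod int q = r mod int q}"
  proof
    show "P \<union> R \<subseteq> {x. x < p+q \<and> L x mod int q = r mod int q}"
      using U Px LR by auto
    show "{x. x < p+q \<and> L x mod int q = r mod int q} \<subseteq> P \<union> R"
      using U Qn by auto
  qed
  show "card (P \<union> R) = p + 1" using fin D cP cR p0 by (simp add: card_Un_disjoint)
  show "Q \<subseteq> {..<p+q}" using U by auto
  show "\<forall>x\<in>Q. L x mod int q \<noteq> r mod int q" using Qn by auto
  have cc: "card (coset_mod (p*q) p r) = q" using coset_card p0 by simp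
  have rin: "r \<in> coset_mod (p*q) p r" using r by (simp add: coset_mod_def)
  have fc: "finite (coset_mod (p*q) p r)" using cc p0 card_ge_0_finite by (metis)
  have "card (L ` Q) = card Q" using cQ LQ cc rin fc by (simp add: card_Diff_singleton)
  then have injL: "inj_on L Q" using fin eq_card_imp_inj_on by blast
  show inj1: "inj_on (\<lambda>x. L x mod int q) Q"
  proof (rule inj_onI)
    fix x y assume xy: "x \<in> Q" "y \<in> Q" "L x mod int q = L y mod int q"
    then have "L x = L y" using Qx[OF xy(1)] Qx[OF xy(2)] key[of "L x" "L y"] by auto
    then show "x = y" by (rule inj_onD[OF injL _ xy(1) xy(2)])
  qed
  show inj2: "inj_on (\<lambda>x. (L x - r) mod int q) Q"
  proof (rule inj_onI)
    fix x y assume xy: "x \<in> Q" "y \<in> Q" "(L x - r) mod int q = (L y - r) mod int q"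
    then have "int q dvd (L x - r) - (L y - r)" by (simp add: mod_eq_dvd_iff)
    then have "L x mod int q = L y mod int q" by (simp add: mod_eq_dvd_iff)
    then show "x = y" by (rule inj_onD[OF inj1 _ xy(1) xy(2)])
  qed
  have sub: "(\<lambda>x. (L x - r) mod int q) ` Q \<subseteq> {1..<int q}"
  proof
    fix v assume "v \<in> (\<lambda>x. (L x - r) mod int q) ` Q"
    then obtain x where x: "x \<in> Q" "v = (L x - r) mod int q" by auto
    have "v \<noteq> 0"
    proof
      assume "v = 0"
      then have "int q dvd L x - r" using x by auto
      then have "L x mod int q = r mod int q" by (simp add: mod_eq_dvd_iff)
      then show False using Qn x by blast
    qed
    moreover have "0 \<le> v" "v < int q" using x p0 by auto
    ultimately show "v \<in> {1..<int q}" by auto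
  qed
  have "card ((\<lambda>x. (L x - r) mod int q) ` Q) = card {1..<int q}"
    using card_image[OF inj2] cQ p0 by simp
  then show "(\<lambda>x. (L x - r) mod int q) ` Q = {1..<int q}"
    using sub by (simp add: card_subset_eq)
qed

lemma Pplus_eq:
  fixes p q :: nat and M :: "nat \<Rightarrow> nat \<Rightarrow> int"
  assumes H: "is_PQR_partition p q M i j P Q R r" and pp: "prime p" "prime q" "p \<noteq> q"
  shows "Pplus p q M i j = {x. x < p+q \<and> Ldiff (p*q) M i j x mod int q = r mod int q}"
  unfolding Pplus_def
proof (rule the_equality)
  show "\<exists>P' Q' R' r'. is_PQR_partition p q M i j P' Q' R' r' \<and>
     {x. x < p+q \<and> Ldiff (p*q) M i j x mod int q = r mod int q} = P' \<union> R'"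
    using H part_facts(1)[OF H pp] by blast
  fix S assume "\<exists>P' Q' R' r'. is_PQR_partition p q M i j P' Q' R' r' \<and> S = P' \<union> R'"
  then obtain P' Q' R' r' where H': "is_PQR_partition p q M i j P' Q' R' r'" and S: "S = P' \<union> R'"
    by blast
  let ?L = "Ldiff (p*q) M i j"
  have "r' mod int q = r mod int q"
  proof (rule ccontr)
    assume ne: "r' mod int q \<noteq> r mod int q"
    have c: "card (P \<union> R) = p + 1" using part_facts(2)[OF H pp] .
    have "p \<ge> 2" using pp prime_ge_2_nat by auto
    then have "card (P \<union> R) \<ge> 1" using c by simp
    then obtain x where x: "x \<in> P \<union> R" by (metis card.empty ex_in_conv not_one_le_zero)
    obtain y where y: "y \<in> P \<union> R" "y \<noteq> x" using two_elems[of "P \<union> R" x] c \<open>p \<ge> 2\<close> x by auto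
    have A: "P \<union> R = {x. x < p+q \<and> ?L x mod int q = r mod int q}" using part_facts(1)[OF H pp] .
    have A': "P' \<union> R' = {x. x < p+q \<and> ?L x mod int q = r' mod int q}" using part_facts(1)[OF H' pp] .
    have U': "P' \<union> Q' \<union> R' = {..<p+q}" using H' unfolding is_PQR_partition_def Let_def by auto
    have xA: "x \<in> {x. x < p+q \<and> ?L x mod int q = r mod int q}" using x by (simp only: A)
    have yA: "y \<in> {x. x < p+q \<and> ?L x mod int q = r mod int q}" using y(1) by (simp only: A)
    have nxA: "x \<notin> {x. x < p+q \<and> ?L x mod int q = r' mod int q}" using xA ne by simp
    have "x \<notin> P' \<union> R'" unfolding A' by (rule nxA)
    moreover have "x \<in> P' \<union> Q' \<union> R'" using xA U' by simp
    ultimately have xQ: "x \<in> Q'" by blast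
    have nyA: "y \<notin> {x. x < p+q \<and> ?L x mod int q = r' mod int q}" using yA ne by simp
    have "y \<notin> P' \<union> R'" unfolding A' by (rule nyA)
    moreover have "y \<in> P' \<union> Q' \<union> R'" using yA U' by simp
    ultimately have yQ: "y \<in> Q'" by blast
    note xQ yQ
    moreover have "?L x mod int q = ?L y mod int q" using xA yA by simp
    ultimately have "x = y" using inj_onD[OF part_facts(3)[OF H' pp]] by blast
    then show False using y by simp
  qed
  then show "S = {x. x < p+q \<and> ?L x mod int q = r mod int q}"
    using S part_facts(1)[OF H' pp] by simp
qed

lemma sum_dvd:
  fixes p q :: nat and M :: "nat \<Rightarrow> nat \<Rightarrow> int"
  assumes H: "is_PQR_partition p q M i j P Q R r" and pp: "prime p" "prime q" "p \<noteq> q"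
    and odd: "odd q"
  shows "int q dvd (\<Sum>x<p+q. (Ldiff (p*q) M i j x - r) mod int q)"
proof -
  let ?a = "\<lambda>x. (Ldiff (p*q) M i j x - r) mod int q"
  have z: "\<forall>x\<in>{..<p + q} - Q. ?a x = 0"
  proof
    fix x assume "x \<in> {..<p + q} - Q"
    then have "x \<in> P \<union> R" using H unfolding is_PQR_partition_def Let_def by auto
    then have "Ldiff (p*q) M i j x mod int q = r mod int q" using part_facts(1)[OF H pp] by auto
    then show "?a x = 0" by (simp add: mod_eq_dvd_iff)
  qed
  have "(\<Sum>x<p+q. ?a x) = (\<Sum>x\<in>Q. ?a x)"
    by (rule sum.mono_neutral_right[OF _ part_facts(4)[OF H pp] z]) simp
  also have "\<dots> = (\<Sum>v\<in>?a ` Q. v)"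
    using sum.reindex[OF part_facts(7)[OF H pp], of id] by simp
  also have "\<dots> = (\<Sum>v\<in>{1..<int q}. v)" using part_facts(6)[OF H pp] by simp
  finally show ?thesis using gauss_dvd[OF odd] by simp
qed

lemma dvd3: "(d::int) dvd a \<Longrightarrow> d dvd b \<Longrightarrow> d dvd c \<Longrightarrow> d dvd a - b - c"
  by (simp add: dvd_diff)
lemma dvd6: "(d::int) dvd a \<Longrightarrow> d dvd b \<Longrightarrow> d dvd c \<Longrightarrow> d dvd e \<Longrightarrow> d dvd f \<Longrightarrow> d dvd g
  \<Longrightarrow> d dvd a - b + c - e + f - g"
  by (simp add: dvd_diff dvd_add)
lemma dvd4: "(d::int) dvd a \<Longrightarrow> d dvd b \<Longrightarrow> d dvd c \<Longrightarrow> d dvd e \<Longrightarrow> d dvd a - b - c + e"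
  by (simp add: dvd_diff dvd_add)
lemma dvd4p: "(d::int) dvd a \<Longrightarrow> d dvd b \<Longrightarrow> d dvd c \<Longrightarrow> d dvd e \<Longrightarrow> d dvd a + b + c + e"
  by (simp add: dvd_add)

lemma Ldiff_dvd:
  "int q dvd (Ldiff (p*q) M a b x - (M b x - M a x))"
proof -
  have "(M b x - M a x) mod (int p * int q) mod int q = (M b x - M a x) mod int q"
    by (rule mod_mod_cancel) simp
  then show ?thesis unfolding Ldiff_def by (simp add: mod_eq_dvd_iff)
qed

lemma Ladd_dvd:
  "int q dvd (Ldiff (p*q) M i k x - Ldiff (p*q) M i j x - Ldiff (p*q) M j k x)"
proof -
  have "Ldiff (p*q) M i k x - Ldiff (p*q) M i j x - Ldiff (p*q) M j k x
     = (Ldiff (p*q) M i k x - (M k x - M i x)) - (Ldiff (p*q) M i j x - (M j x - M i x))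
       - (Ldiff (p*q) M j k x - (M k x - M j x))" by simp
  then show ?thesis using Ldiff_dvd[of q p M i k x] Ldiff_dvd[of q p M i j x] Ldiff_dvd[of q p M j k x]
    by (simp only:) (rule dvd3; assumption)
qed

theorem corollary6p5:
  fixes p q :: nat and M :: "nat \<Rightarrow> nat \<Rightarrow> int" and i j k :: nat
  assumes "prime p" and "prime q" and "p \<noteq> q"
    and "complex_hadamard_mod (p + q) (p * q) M"
    and "\<forall>a<p + q. \<forall>b<p + q. a \<noteq> b \<longrightarrow> (\<exists>P Q R r. is_PQR_partition p q M a b P Q R r)"
    and "p \<ge> 5"
    and "i < p + q" and "j < p + q" and "k < p + q"
    and "i \<noteq> j" and "j \<noteq> k" and "i \<noteq> k"
  shows "Pplus p q M i j \<inter> Pplus p q M j k \<subseteq> Pplus p q M i k"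
proof -
  have pp: "prime p" "prime q" "p \<noteq> q" using assms by auto
  obtain P1 Q1 R1 r1 where H1: "is_PQR_partition p q M i j P1 Q1 R1 r1" using assms by blast
  obtain P2 Q2 R2 r2 where H2: "is_PQR_partition p q M j k P2 Q2 R2 r2" using assms by blast
  obtain P3 Q3 R3 r3 where H3: "is_PQR_partition p q M i k P3 Q3 R3 r3" using assms by blast
  define L1 where "L1 = Ldiff (p*q) M i j"
  define L2 where "L2 = Ldiff (p*q) M j k"
  define L3 where "L3 = Ldiff (p*q) M i k"
  have add: "int q dvd (L3 x - L1 x - L2 x)" for x
    unfolding L1_def L2_def L3_def by (rule Ladd_dvd)
  have E1: "Pplus p q M i j = P1 \<union> R1" and E2: "Pplus p q M j k = P2 \<union> R2"
    and E3: "Pplus p q M i k = P3 \<union> R3"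
    using Pplus_eq[OF H1 pp] Pplus_eq[OF H2 pp] Pplus_eq[OF H3 pp]
      part_facts(1)[OF H1 pp] part_facts(1)[OF H2 pp] part_facts(1)[OF H3 pp] by auto
  have S1: "P1 \<union> R1 = {x. x < p+q \<and> L1 x mod int q = r1 mod int q}"
    using part_facts(1)[OF H1 pp] L1_def by simp
  have S2: "P2 \<union> R2 = {x. x < p+q \<and> L2 x mod int q = r2 mod int q}"
    using part_facts(1)[OF H2 pp] L2_def by simp
  have S3: "P3 \<union> R3 = {x. x < p+q \<and> L3 x mod int q = r3 mod int q}"
    using part_facts(1)[OF H3 pp] L3_def by simp
  have U3: "P3 \<union> Q3 \<union> R3 = {..<p+q}" using H3 unfolding is_PQR_partition_def Let_def by auto
  have inj3: "inj_on (\<lambda>x. L3 x mod int q) Q3" using part_facts(3)[OF H3 pp] L3_def by simp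
  let ?X = "P1 \<union> R1" and ?Y = "P2 \<union> R2"
  have cX: "card ?X = p + 1" and cY: "card ?Y = p + 1"
    using part_facts(2)[OF H1 pp] part_facts(2)[OF H2 pp] by auto
  have XN: "?X \<subseteq> {..<p+q}" by (subst S1) auto
  have YN: "?Y \<subseteq> {..<p+q}" by (subst S2) auto
  have finXY: "finite ?X" "finite ?Y" using XN YN finite_subset by blast+
  have memX: "z < p+q \<and> int q dvd L1 z - r1" if "z \<in> ?X" for z
  proof -
    have "z \<in> {x. x < p+q \<and> L1 x mod int q = r1 mod int q}" using that by (simp only: S1)
    then show ?thesis by (simp add: mod_eq_dvd_iff)
  qed
  have memY: "z < p+q \<and> int q dvd L2 z - r2" if "z \<in> ?Y" for z
  proof -
    have "z \<in> {x. x < p+q \<and> L2 x mod int q = r2 mod int q}" using that by (simp only: S2)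
    then show ?thesis by (simp add: mod_eq_dvd_iff)
  qed
  show ?thesis unfolding E1 E2 E3
  proof
    fix x assume x: "x \<in> ?X \<inter> ?Y"
    have x1: "int q dvd L1 x - r1" and x2: "int q dvd L2 x - r2" and xN: "x < p+q"
      using memX[OF IntD1[OF x]] memY[OF IntD2[OF x]] by auto
    show "x \<in> P3 \<union> R3"
    proof (cases "card (?X \<inter> ?Y) \<ge> 2")
      case True
      obtain y where y: "y \<in> ?X \<inter> ?Y" "y \<noteq> x" using two_elems[OF True x] by blast
      have y1: "int q dvd L1 y - r1" and y2: "int q dvd L2 y - r2" and yN: "y < p+q"
        using memX[OF IntD1[OF y(1)]] memY[OF IntD2[OF y(1)]] by auto
      have "L3 x - L3 y = (L3 x - L1 x - L2 x) - (L3 y - L1 y - L2 y) + (L1 x - r1) - (L1 y - r1)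
          + (L2 x - r2) - (L2 y - r2)" by simp
      then have "int q dvd L3 x - L3 y" using add[of x] add[of y] x1 x2 y1 y2
        by (simp only:) (rule dvd6; assumption)
      then have same: "L3 x mod int q = L3 y mod int q" by (simp add: mod_eq_dvd_iff)
      show ?thesis
      proof (rule ccontr)
        assume nx: "x \<notin> P3 \<union> R3"
        then have "L3 x mod int q \<noteq> r3 mod int q" using S3 xN by auto
        then have "y \<notin> P3 \<union> R3" using S3 same by auto
        then have "x \<in> Q3" "y \<in> Q3" using nx xN yN U3 by auto
        then have "x = y" using inj_onD[OF inj3 same] by blast
        then show False using y by simp
      qed
    next
      case False
      have "?X \<union> ?Y \<subseteq> {..<p+q}" using XN YN by (rule Un_least)
      then have "card (?X \<union> ?Y) \<le> card {..<p+q}" by (rule card_mono[rotated]) simp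
      then have "card (?X \<union> ?Y) \<le> p + q" by simp
      moreover have "card ?X + card ?Y = card (?X \<union> ?Y) + card (?X \<inter> ?Y)"
        using card_Un_Int[OF finXY] .
      ultimately have "q > 2" using cX cY False assms(6) by linarith
      then have odd: "odd q" using prime_odd_nat pp by blast
      define c where "c = r1 + r2 - r3"
      define a1 where "a1 x = (L1 x - r1) mod int q" for x
      define a2 where "a2 x = (L2 x - r2) mod int q" for x
      define a3 where "a3 x = (L3 x - r3) mod int q" for x
      have d1: "int q dvd (\<Sum>x<p+q. a1 x)" using sum_dvd[OF H1 pp odd] a1_def L1_def by simp
      have d2: "int q dvd (\<Sum>x<p+q. a2 x)" using sum_dvd[OF H2 pp odd] a2_def L2_def by simp
      have d3: "int q dvd (\<Sum>x<p+q. a3 x)" using sum_dvd[OF H3 pp odd] a3_def L3_def by simp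
      have md: "int q dvd (u mod int q - u)" for u using mod_eq_dvd_iff[of "u mod int q" "int q" u] by simp
      have trm: "int q dvd (a3 x - a1 x - a2 x - c)" for x
      proof -
        have "a3 x - a1 x - a2 x - c = (a3 x - (L3 x - r3)) - (a1 x - (L1 x - r1))
           - (a2 x - (L2 x - r2)) + (L3 x - L1 x - L2 x)" unfolding c_def by simp
        then show ?thesis using md[of "L3 x - r3"] md[of "L1 x - r1"] md[of "L2 x - r2"] add[of x]
          unfolding a1_def a2_def a3_def by (simp only:) (rule dvd4; assumption)
      qed
      have "(\<Sum>x<p+q. a3 x - a1 x - a2 x - c) =
          (\<Sum>x<p+q. a3 x) - (\<Sum>x<p+q. a1 x) - (\<Sum>x<p+q. a2 x) - int (p+q) * c"
        by (simp add: sum_subtractf)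
      moreover have "int q dvd (\<Sum>x<p+q. a3 x - a1 x - a2 x - c)"
        by (rule dvd_sum) (use trm in auto)
      ultimately have T: "int q dvd (\<Sum>x<p+q. a3 x) - (\<Sum>x<p+q. a1 x) - (\<Sum>x<p+q. a2 x) - int (p+q) * c"
        by simp
      have A: "int q dvd (\<Sum>x<p+q. a3 x) - (\<Sum>x<p+q. a1 x) - (\<Sum>x<p+q. a2 x)"
        by (rule dvd3[OF d3 d1 d2])
      have "int q dvd ((\<Sum>x<p+q. a3 x) - (\<Sum>x<p+q. a1 x) - (\<Sum>x<p+q. a2 x))
         - ((\<Sum>x<p+q. a3 x) - (\<Sum>x<p+q. a1 x) - (\<Sum>x<p+q. a2 x) - int (p+q) * c)"
        by (rule dvd_diff[OF A T])
      then have NC: "int q dvd int (p+q) * c" by simp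
      have e: "int p * c = int (p+q) * c - int q * c" by (simp add: algebra_simps)
      have "int q dvd int p * c" by (subst e) (rule dvd_diff[OF NC dvd_triv_left])
      moreover have "prime (int q)" using pp by simp
      moreover have "\<not> int q dvd int p"
        using primes_dvd_imp_eq[of q p] pp by auto
      ultimately have dc: "int q dvd c" using prime_dvd_mult_iff by blast
      have "L3 x - r3 = (L3 x - L1 x - L2 x) + (L1 x - r1) + (L2 x - r2) + c"
        unfolding c_def by simp
      then have "int q dvd L3 x - r3" using add[of x] x1 x2 dc by (simp only:) (rule dvd4p; assumption)
      then show ?thesis using S3 xN by (simp add: mod_eq_dvd_iff)
    qed
  qed
qed

end
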